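(* Let $\mu$ and $\nu$ be probability distributions on $\mathcal{X}\subseteq\mathbb{R}^d$, and let $\mathcal{P}\subseteq\{1,\dots,d\}$ be a set of protected attributes such that every $x\in\mathcal{X}$ satisfies $x_p\in\{0,1\}$ for all $p\in\mathcal{P}$. Let $x_1,\dots,x_{N_1}$ be independent samples from $\mu$ and $x'_1,\dots,x'_{N_2}$ independent samples from $\nu$ (the two samples independent of each other), and let $\hat\mu=\frac{1}{N_1}\sum_{i=1}^{N_1}\delta_{x_i}$ and $\hat\nu=\frac{1}{N_2}\sum_{i=1}^{N_2}\delta_{x'_i}$ be the empirical distributions. Fix $\delta>0$ and set $N=\min(N_1,N_2)$. Then with probability at least $1-2\delta$ over the samples, $$\mathrm{MSD}(\mu,\nu;\mathcal{P})\le \mathrm{MSD}(\hat\mu,\hat\nu;\mathcal{P})+4\sqrt{\frac{2|\mathcal{P}|+\log\frac{2}{\delta}}{2N}}.$$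
   Context: For $x\in\mathbb{R}^d$ and $p\in\mathcal{P}$, $x_p$ denotes the $p$-th coordinate and $\bar x_p:=1-x_p$. The set of literals is $\mathcal{L}=\{x\mapsto x_p,\ x\mapsto\bar x_p : p\in\mathcal{P}\}$. For a subset $S\subseteq\mathcal{L}$ (called a subgroup), the term $\chi_S:\mathbb{R}^d\to\{0,1\}$ is $\chi_S(x)=\prod_{s\in S}s(x)$ (the empty product being $1$). Let $\mathcal{S}$ denote the set of all subgroups $S\subseteq\mathcal{L}$. For a distribution $\mu$ and function $f$, $\mu(f)=\int f\,d\mu$. The Maximum Subgroup Discrepancy is $\mathrm{MSD}(\mu,\nu;\mathcal{P})=\sup_{S\in\mathcal{S}}|\mu(\chi_S)-\nu(\chi_S)|$. $\delta_x$ is the point mass at $x$, and $\log$ is the natural logarithm. *)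

theory Defs
  imports "HOL-Probability.Probability"
begin

definition literals :: "'d set \<Rightarrow> ('d \<times> bool) set" where
  "literals P = P \<times> UNIV"

definition lit :: "'d \<times> bool \<Rightarrow> real ^ 'd \<Rightarrow> real" where
  "lit l x = (if snd l then x $ fst l else 1 - x $ fst l)"

definition chi :: "('d \<times> bool) set \<Rightarrow> real ^ 'd \<Rightarrow> real" where
  "chi S x = (\<Prod>l\<in>S. lit l x)"

definition subgroups :: "'d set \<Rightarrow> ('d \<times> bool) set set" where
  "subgroups P = Pow (literals P)"

definition MSD :: "(real ^ 'd) measure \<Rightarrow> (real ^ 'd) measure \<Rightarrow> 'd set \<Rightarrow> real" where
  "MSD \<mu> \<nu> P = (SUP S\<in>subgroups P. \<bar>integral\<^sup>L \<mu> (chi S) - integral\<^sup>L \<nu> (chi S)\<bar>)"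

definition emp :: "nat \<Rightarrow> (nat \<Rightarrow> 'a) \<Rightarrow> 'a measure" where
  "emp n xs = measure_pmf (map_pmf xs (pmf_of_set {..<n}))"

end

theory Submission
  imports Defs
begin

lemma chi_borel[measurable]: "chi S \<in> borel_measurable borel"
  unfolding chi_def lit_def by measurable


lemma indep_coords:
  assumes "prob_space M" "I \<noteq> {}"
  shows "prob_space.indep_vars (PiM I (\<lambda>_. M)) (\<lambda>_. M) (\<lambda>i \<omega>. \<omega> i) I"
proof -
  interpret P: prob_space "PiM I (\<lambda>_. M)" by (intro prob_space_PiM) (simp add: assms)
  have "distr (PiM I (\<lambda>_. M)) (PiM I (\<lambda>_. M)) (\<lambda>x. restrict x I) = distr (PiM I (\<lambda>_. M)) (PiM I (\<lambda>_. M)) (\<lambda>x. x)"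
    by (intro distr_cong) (auto simp: space_PiM)
  also have "\<dots> = PiM I (\<lambda>_. M)" by simp
  also have "\<dots> = PiM I (\<lambda>i. distr (PiM I (\<lambda>_. M)) M (\<lambda>\<omega>. \<omega> i))"
    by (intro PiM_cong refl distr_PiM_component[symmetric]) (auto simp: assms)
  finally show ?thesis
    by (subst P.indep_vars_iff_distr_eq_PiM'[OF assms(2)]) auto
qed

lemma chi_01:
  assumes "\<forall>p\<in>P. x $ p \<in> {0,1}" "S \<in> subgroups P"
  shows "chi S x \<in> {0..1}"
proof -
  have "lit l x \<in> {0..1}" if "l \<in> S" for l
  proof -
    have "fst l \<in> P" using assms(2) that by (auto simp: subgroups_def literals_def)
    then have "x $ fst l = 0 \<or> x $ fst l = 1" using assms(1) by auto
    then show ?thesis by (auto simp: lit_def)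
  qed
  then show ?thesis unfolding chi_def
    by (auto intro!: prod_nonneg prod_le_1)
qed

lemma one_S:
  fixes \<mu> :: "(real^'d) measure" and P :: "'d set" and n :: nat and t :: real
  assumes mu: "prob_space \<mu>" "sets \<mu> = sets borel" and X: "X \<in> sets borel" "emeasure \<mu> X = 1"
   and XP: "\<forall>x\<in>X. \<forall>p\<in>P. x $ p \<in> {0,1}" and n: "n \<ge> 1" and t: "t \<ge> 0"
   and S: "S \<in> subgroups P"
  shows "measure (PiM {..<n} (\<lambda>_. \<mu>)) {xs \<in> space (PiM {..<n} (\<lambda>_. \<mu>)).
            t \<le> \<bar>(\<Sum>i<n. chi S (xs i)) / real n - integral\<^sup>L \<mu> (chi S)\<bar>} \<le> 2 * exp (-2 * real n * t\<^sup>2)"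
proof -
  let ?M = "PiM {..<n} (\<lambda>_. \<mu>)"
  interpret PM: prob_space ?M by (intro prob_space_PiM) (simp add: mu)
  have ne: "{..<n} \<noteq> {}" using n by (auto simp: lessThan_empty_iff)
  have m0: "(0::nat) \<in> {..<n}" using n by auto
  have chiM[measurable]: "chi S \<in> borel_measurable \<mu>"
    by (subst measurable_cong_sets[OF mu(2) refl]) (rule chi_borel)
  have dc: "distr ?M \<mu> (\<lambda>\<omega>. \<omega> i) = \<mu>" if "i \<in> {..<n}" for i
    by (rule distr_PiM_component) (use mu that in auto)
  have dX: "distr ?M borel (\<lambda>xs. chi S (xs i)) = distr \<mu> borel (chi S)" if "i \<in> {..<n}" for i
  proof -
    have "distr ?M borel (\<lambda>xs. chi S (xs i)) = distr (distr ?M \<mu> (\<lambda>\<omega>. \<omega> i)) borel (chi S)"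
      by (subst distr_distr) (use that in \<open>auto simp: comp_def\<close>)
    then show ?thesis using dc[OF that] by simp
  qed
  have aeX: "AE x in \<mu>. x \<in> X"
    using prob_space.AE_in_set_eq_1[OF mu(1)] X mu(2) by (auto simp: measure_def)
  have ae: "AE xs in ?M. chi S (xs 0) \<in> {0..1}"
  proof -
    have "AE x in \<mu>. chi S x \<in> {0..1}"
      using aeX by eventually_elim (use XP chi_01[OF _ S] in auto)
    then show ?thesis
      using AE_PiM_component[of "{..<n}" "\<lambda>_. \<mu>" 0 "\<lambda>x. chi S x \<in> {0..1}"] m0 mu(1) by simp
  qed
  have rv0: "(\<lambda>xs. chi S (xs 0)) \<in> borel_measurable ?M"
    using measurable_compose[OF measurable_component_singleton[OF m0] chiM] by simp
  interpret H: Hoeffding_ineq_iid ?M "{..<n}" "\<lambda>i xs. chi S (xs i)" "\<lambda>xs. chi S (xs 0)" 0 1 "PM.expectation (\<lambda>xs. chi S (xs 0))"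
  proof unfold_locales
    show "PM.indep_vars (\<lambda>_. borel) (\<lambda>i xs. chi S (xs i)) {..<n}"
      using PM.indep_vars_compose2[OF indep_coords[OF mu(1) ne], of "\<lambda>_. chi S" "\<lambda>_. borel"] by simp
    show "distr ?M borel (\<lambda>xs. chi S (xs i)) = distr ?M borel (\<lambda>xs. chi S (xs 0))" if "i \<in> {..<n}" for i
      using dX[OF that] dX[OF m0] by simp
  qed (use ae rv0 in \<open>simp_all\<close>)
  have E: "PM.expectation (\<lambda>xs. chi S (xs 0)) = integral\<^sup>L \<mu> (chi S)"
  proof -
    have "PM.expectation (\<lambda>xs. chi S (xs 0)) = integral\<^sup>L (distr ?M \<mu> (\<lambda>\<omega>. \<omega> 0)) (chi S)"
      using integral_distr[OF measurable_component_singleton[OF m0] chiM] by simp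
    then show ?thesis using dc[OF m0] by simp
  qed
  have "PM.prob {xs \<in> space ?M. \<bar>(\<Sum>i\<in>{..<n}. chi S (xs i)) / real (card {..<n}) - PM.expectation (\<lambda>xs. chi S (xs 0))\<bar> \<ge> t}
     \<le> 2 * exp (-2 * real (card {..<n}) * t\<^sup>2 / (1 - 0)\<^sup>2)"
    by (rule H.Hoeffding_ineq_abs_ge'[OF t _ ne]) simp
  then show ?thesis using E by simp
qed

lemma arith_bound:
  fixes k n N :: nat and \<delta> :: real
  assumes d: "0 < \<delta>" "\<delta> < 1/2" and N: "N \<ge> 1" "N \<le> n"
  shows "real (4^k) * (2 * exp (-2 * real n * (sqrt ((2*real k + ln(2/\<delta>))/(2*real N)))\<^sup>2)) \<le> \<delta>"
proof -
  have L: "ln (2/\<delta>) > 0" using d by simp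
  define q where "q = (2*real k + ln(2/\<delta>))/(2*real N)"
  have q0: "q \<ge> 0" using L N by (simp add: q_def)
  have sq: "(sqrt q)\<^sup>2 = q" using q0 by simp
  have "-2 * real n * q \<le> -2 * real N * q"
    using N q0 by (simp add: mult_right_mono)
  then have "exp (-2 * real n * q) \<le> exp (-2 * real N * q)" by simp
  also have "-2 * real N * q = real k * (-2) + - ln (2/\<delta>)"
    using N by (simp add: q_def field_simps)
  also have "exp \<dots> = exp (-2) ^ k * (\<delta>/2)"
  proof -
    have a: "exp (real k * (-2)) = exp (-2) ^ k" by (rule exp_of_nat_mult)
    have b: "exp (- ln (2/\<delta>)) = \<delta>/2" using d by (simp add: exp_minus)
    show ?thesis by (simp only: exp_add a b)
  qed
  finally have e: "exp (-2 * real n * q) \<le> exp (-2) ^ k * (\<delta>/2)" .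
  have e1: "exp (1::real) \<ge> 2" using exp_ge_add_one_self[of 1] by simp
  have "exp (2::real) = exp 1 * exp 1" by (metis exp_add one_add_one)
  also have "\<dots> \<ge> 4" using mult_mono[OF e1 e1] by simp
  finally have "4 * exp (-2::real) \<le> 1" by (simp add: exp_minus field_simps)
  then have p: "(4 * exp (-2::real)) ^ k \<le> 1"
    by (intro power_le_one) auto
  have "real (4^k) * (2 * exp (-2 * real n * q)) \<le> real (4^k) * (2 * (exp (-2) ^ k * (\<delta>/2)))"
    using e by (intro mult_left_mono) auto
  also have "\<dots> = (4 * exp (-2)) ^ k * \<delta>" by (simp add: power_mult_distrib)
  also have "\<dots> \<le> \<delta>" using p d by (simp add: mult_left_le_one_le)
  finally show ?thesis unfolding q_def sq[unfolded q_def] .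
qed

lemma avg_meas:
  fixes \<mu> :: "(real^'d) measure"
  assumes "sets \<mu> = sets borel"
  shows "(\<lambda>xs. (\<Sum>i<n. chi S (xs i)) / real n) \<in> borel_measurable (PiM {..<n} (\<lambda>_. \<mu>))"
proof -
  have chiM: "chi S \<in> borel_measurable \<mu>"
    by (subst measurable_cong_sets[OF assms refl]) (rule chi_borel)
  have "(\<lambda>xs. chi S (xs i)) \<in> borel_measurable (PiM {..<n} (\<lambda>_. \<mu>))" if "i \<in> {..<n}" for i
    using measurable_compose[OF measurable_component_singleton[OF that] chiM] by simp
  then show ?thesis
    by (intro borel_measurable_divide borel_measurable_sum borel_measurable_const) auto
qed

lemma finite_subgroups: "finite (subgroups (P :: 'd::finite set))"
  unfolding subgroups_def literals_def by simp

lemma card_subgroups: "card (subgroups (P :: 'd::finite set)) = 4 ^ card P"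
proof -
  have "card (literals P) = 2 * card P"
    unfolding literals_def by (simp add: card_cartesian_product)
  then show ?thesis unfolding subgroups_def
    by (simp add: card_Pow power_mult)
qed

lemma one_side_all:
  fixes \<mu> :: "(real^'d) measure" and P :: "'d set" and n :: nat and t :: real
  assumes mu: "prob_space \<mu>" "sets \<mu> = sets borel" and X: "X \<in> sets borel" "emeasure \<mu> X = 1"
   and XP: "\<forall>x\<in>X. \<forall>p\<in>P. x $ p \<in> {0,1}" and n: "n \<ge> 1" and t: "t \<ge> 0"
  defines "bad \<equiv> (\<Union>S\<in>subgroups P. {xs \<in> space (PiM {..<n} (\<lambda>_. \<mu>)).
            t \<le> \<bar>(\<Sum>i<n. chi S (xs i)) / real n - integral\<^sup>L \<mu> (chi S)\<bar>})"
  shows "bad \<in> sets (PiM {..<n} (\<lambda>_. \<mu>))"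
    and "measure (PiM {..<n} (\<lambda>_. \<mu>)) bad \<le> real (card (subgroups P)) * (2 * exp (-2 * real n * t\<^sup>2))"
proof -
  let ?M = "PiM {..<n} (\<lambda>_. \<mu>)"
  have ms: "{xs \<in> space ?M. t \<le> \<bar>(\<Sum>i<n. chi S (xs i)) / real n - integral\<^sup>L \<mu> (chi S)\<bar>} \<in> sets ?M" for S
  proof -
    have [measurable]: "(\<lambda>xs. (\<Sum>i<n. chi S (xs i)) / real n) \<in> borel_measurable ?M"
      by (rule avg_meas[OF mu(2)])
    show ?thesis by measurable
  qed
  show "bad \<in> sets ?M" unfolding bad_def
    by (intro sets.finite_UN finite_subgroups ms)
  have "measure ?M bad \<le> (\<Sum>S\<in>subgroups P. measure ?M {xs \<in> space ?M. t \<le> \<bar>(\<Sum>i<n. chi S (xs i)) / real n - integral\<^sup>L \<mu> (chi S)\<bar>})"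
    unfolding bad_def by (intro measure_UNION_le finite_subgroups ms)
  also have "\<dots> \<le> (\<Sum>S\<in>subgroups P. 2 * exp (-2 * real n * t\<^sup>2))"
    by (intro sum_mono one_S[OF mu X XP n t])
  also have "\<dots> = real (card (subgroups P)) * (2 * exp (-2 * real n * t\<^sup>2))" by simp
  finally show "measure ?M bad \<le> real (card (subgroups P)) * (2 * exp (-2 * real n * t\<^sup>2))" .
qed

lemma emp_integral:
  assumes "n \<ge> 1"
  shows "integral\<^sup>L (emp n xs) f = (\<Sum>i<n. f (xs i)) / real n"
proof -
  have "{..<n} \<noteq> {}" using assms by (auto simp: lessThan_empty_iff)
  then show ?thesis unfolding emp_def by (simp add: integral_pmf_of_set)
qed


lemma MSD_emp:
  assumes "N1 \<ge> 1" "N2 \<ge> 1"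
  shows "MSD (emp N1 xs) (emp N2 ys) (P::'d::finite set) =
    Max ((\<lambda>S. \<bar>(\<Sum>i<N1. chi S (xs i)) / real N1 - (\<Sum>i<N2. chi S (ys i)) / real N2\<bar>) ` subgroups P)"
  unfolding MSD_def emp_integral[OF assms(1)] emp_integral[OF assms(2)]
  by (intro cSup_eq_Max) (auto simp: finite_subgroups subgroups_def)

theorem theorem3p1:
  fixes \<mu> \<nu> :: "(real ^ 'd) measure" and X :: "(real ^ 'd) set" and P :: "'d set"
    and N1 N2 :: nat and \<delta> :: real
  assumes "prob_space \<mu>" and "sets \<mu> = sets borel"
    and "prob_space \<nu>" and "sets \<nu> = sets borel"
    and "X \<in> sets borel" and "emeasure \<mu> X = 1" and "emeasure \<nu> X = 1"
    and "\<forall>x\<in>X. \<forall>p\<in>P. x $ p \<in> {0, 1}"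
    and "N1 \<ge> 1" and "N2 \<ge> 1" and "\<delta> > 0"
  shows "measure ((\<Pi>\<^sub>M i\<in>{..<N1}. \<mu>) \<Otimes>\<^sub>M (\<Pi>\<^sub>M i\<in>{..<N2}. \<nu>))
           {(xs, ys) \<in> space ((\<Pi>\<^sub>M i\<in>{..<N1}. \<mu>) \<Otimes>\<^sub>M (\<Pi>\<^sub>M i\<in>{..<N2}. \<nu>)).
              MSD \<mu> \<nu> P \<le> MSD (emp N1 xs) (emp N2 ys) P
                + 4 * sqrt ((2 * real (card P) + ln (2 / \<delta>)) / (2 * real (min N1 N2)))}
         \<ge> 1 - 2 * \<delta>"
proof -
  note mu = assms(1,2) and nu = assms(3,4) and X = assms(5) and XP = assms(8)
  let ?M1 = "PiM {..<N1} (\<lambda>_. \<mu>)" and ?M2 = "PiM {..<N2} (\<lambda>_. \<nu>)"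
  let ?M = "?M1 \<Otimes>\<^sub>M ?M2"
  let ?T = "{(xs, ys) \<in> space ?M. MSD \<mu> \<nu> P \<le> MSD (emp N1 xs) (emp N2 ys) P
                + 4 * sqrt ((2 * real (card P) + ln (2 / \<delta>)) / (2 * real (min N1 N2)))}"
  interpret M1: prob_space ?M1 by (intro prob_space_PiM) (simp add: mu)
  interpret M2: prob_space ?M2 by (intro prob_space_PiM) (simp add: nu)
  interpret PM: pair_prob_space ?M1 ?M2 by unfold_locales
  show ?thesis
  proof (cases "\<delta> < 1/2")
    case False
    then show ?thesis using measure_nonneg[of ?M ?T] by linarith
  next
    case True
    define t where "t = sqrt ((2 * real (card P) + ln (2 / \<delta>)) / (2 * real (min N1 N2)))"
    have t0: "t \<ge> 0" unfolding t_def using True assms(11) by simp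
    have Nge: "min N1 N2 \<ge> 1" using assms(9,10) by simp
    define SG where "SG = subgroups P"
    have SGfin: "finite SG" "SG \<noteq> {}" by (auto simp: SG_def finite_subgroups subgroups_def)
    define a1 where "a1 (S::('d\<times>bool) set) (xs::nat \<Rightarrow> real^'d) = (\<Sum>i<N1. chi S (xs i)) / real N1" for S xs
    define a2 where "a2 (S::('d\<times>bool) set) (ys::nat \<Rightarrow> real^'d) = (\<Sum>i<N2. chi S (ys i)) / real N2" for S ys
    define bad1 where "bad1 = (\<Union>S\<in>subgroups P. {xs \<in> space ?M1.
            t \<le> \<bar>(\<Sum>i<N1. chi S (xs i)) / real N1 - integral\<^sup>L \<mu> (chi S)\<bar>})"
    define bad2 where "bad2 = (\<Union>S\<in>subgroups P. {xs \<in> space ?M2.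
            t \<le> \<bar>(\<Sum>i<N2. chi S (xs i)) / real N2 - integral\<^sup>L \<nu> (chi S)\<bar>})"
    note o1 = one_side_all[OF mu X assms(6) XP assms(9) t0, folded bad1_def]
    note o2 = one_side_all[OF nu X assms(7) XP assms(10) t0, folded bad2_def]
    have b1: "measure ?M1 bad1 \<le> \<delta>"
      using o1(2) arith_bound[OF assms(11) True Nge, where k = "card P" and n = N1]
      by (simp add: card_subgroups t_def)
    have b2: "measure ?M2 bad2 \<le> \<delta>"
      using o2(2) arith_bound[OF assms(11) True Nge, where k = "card P" and n = N2]
      by (simp add: card_subgroups t_def)
    define A where "A = space ?M1 - bad1"
    define B where "B = space ?M2 - bad2"
    have A: "A \<in> sets ?M1" "measure ?M1 A \<ge> 1 - \<delta>"
      using M1.prob_compl[OF o1(1)] b1 o1(1) by (auto simp: A_def)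
    have B: "B \<in> sets ?M2" "measure ?M2 B \<ge> 1 - \<delta>"
      using M2.prob_compl[OF o2(1)] b2 o2(1) by (auto simp: B_def)
    have sub: "A \<times> B \<subseteq> ?T"
    proof safe
      fix xs ys assume xs: "xs \<in> A" and ys: "ys \<in> B"
      show "(xs, ys) \<in> space ?M" using xs ys by (auto simp: A_def B_def space_pair_measure)
      let ?h = "MSD (emp N1 xs) (emp N2 ys) P"
      have h: "\<bar>a1 S xs - a2 S ys\<bar> \<le> ?h" if "S \<in> SG" for S
        unfolding MSD_emp[OF assms(9,10)] a1_def a2_def
        using that SGfin SG_def by (intro Max_ge) auto
      have "MSD \<mu> \<nu> P \<le> ?h + 2 * t"
        unfolding MSD_def[of \<mu> \<nu> P]
      proof (rule cSUP_least)
        show "subgroups P \<noteq> {}" using SGfin SG_def by simp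
        fix S assume S: "S \<in> subgroups P"
        have "\<bar>a1 S xs - integral\<^sup>L \<mu> (chi S)\<bar> < t"
          using xs S by (auto simp: A_def bad1_def a1_def)
        moreover have "\<bar>a2 S ys - integral\<^sup>L \<nu> (chi S)\<bar> < t"
          using ys S by (auto simp: B_def bad2_def a2_def)
        moreover have "\<bar>a1 S xs - a2 S ys\<bar> \<le> ?h" using h S SG_def by simp
        ultimately show "\<bar>integral\<^sup>L \<mu> (chi S) - integral\<^sup>L \<nu> (chi S)\<bar> \<le> ?h + 2 * t"
          by linarith
      qed
      then show "MSD \<mu> \<nu> P \<le> ?h + 4 * sqrt ((2 * real (card P) + ln (2 / \<delta>)) / (2 * real (min N1 N2)))"
        using t0 unfolding t_def[symmetric] by linarith
    qed
    have Tm: "?T \<in> sets ?M"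
    proof -
      let ?c = "MSD \<mu> \<nu> P - 4 * t"
      have "?T = (\<Union>S\<in>SG. {z \<in> space ?M. ?c \<le> \<bar>a1 S (fst z) - a2 S (snd z)\<bar>})"
      proof -
        have "MSD \<mu> \<nu> P \<le> MSD (emp N1 xs) (emp N2 ys) P + 4 * t \<longleftrightarrow>
              (\<exists>S\<in>SG. ?c \<le> \<bar>a1 S xs - a2 S ys\<bar>)" for xs ys
        proof -
          let ?f = "\<lambda>S. \<bar>(\<Sum>i<N1. chi S (xs i)) / real N1 - (\<Sum>i<N2. chi S (ys i)) / real N2\<bar>"
          have fin: "finite (?f ` subgroups P)" "?f ` subgroups P \<noteq> {}"
            using SGfin SG_def by auto
          have "(MSD \<mu> \<nu> P \<le> Max (?f ` subgroups P) + 4 * t) = (?c \<le> Max (?f ` subgroups P))"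
            by linarith
          also have "\<dots> = (\<exists>S\<in>subgroups P. ?c \<le> ?f S)"
            using Max_ge_iff[OF fin] by simp
          finally show ?thesis
            unfolding MSD_emp[OF assms(9,10)] a1_def a2_def SG_def .
        qed
        then show ?thesis unfolding t_def by auto
      qed
      also have "\<dots> \<in> sets ?M"
      proof (intro sets.finite_UN SGfin)
        fix S
        have [measurable]: "a1 S \<in> borel_measurable ?M1"
          unfolding a1_def[abs_def] by (rule avg_meas[OF mu(2)])
        have [measurable]: "a2 S \<in> borel_measurable ?M2"
          unfolding a2_def[abs_def] by (rule avg_meas[OF nu(2)])
        show "{z \<in> space ?M. ?c \<le> \<bar>a1 S (fst z) - a2 S (snd z)\<bar>} \<in> sets ?M"
          by measurable
      qed
      finally show ?thesis .
    qed
    have "measure ?M (A \<times> B) = measure ?M1 A * measure ?M2 B"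
    proof -
      have "emeasure ?M (A \<times> B) = emeasure ?M1 A * emeasure ?M2 B"
        by (rule M2.emeasure_pair_measure_Times[OF A(1) B(1)])
      then show ?thesis by (simp add: measure_def enn2real_mult)
    qed
    also have "\<dots> \<ge> (1 - \<delta>) * (1 - \<delta>)"
      using A B True by (intro mult_mono) auto
    moreover have "(1 - \<delta>) * (1 - \<delta>) \<ge> 1 - 2 * \<delta>"
      by (simp add: algebra_simps)
    moreover have "measure ?M (A \<times> B) \<le> measure ?M ?T"
      by (intro PM.finite_measure_mono sub Tm)
    ultimately show ?thesis by linarith
  qed
qed

end
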